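(* Let $\eta_{0},\eta_{1},\eta_{2}>0$ and $\beta(s)=\eta_{0}\exp(-\eta_{1}s^{\eta_{2}})$ for $s>0$, and fix $a>0$. Let $K(u)=u\beta(1/u)$ for $u>0$, $K(0)=0$, $K^{*}(v)=\sup_{u\ge0}\{uv-K(u)\}$, and $F_{a}(x)=\int_{x}^{a}\frac{\mathrm{d}v}{K^{*}(v)}$ for $x\in(0,a]$, with inverse $F_{a}^{-1}$. Then there exist $C>0$ and $0<v_{0}<1\wedge a$ such that for all $v\in(0,v_{0}]$, \[ K^{*}(v)\ge Cv\Big(\log\frac{1}{v}\Big)^{-1/\eta_{2}}, \] and there exists $C'>0$ such that for all $n\in\mathbb{N}$, \[ F_{a}^{-1}(n)\le C'\exp\Big(-\Big(C\frac{1+\eta_{2}}{\eta_{2}}n\Big)^{\eta_{2}/(1+\eta_{2})}\Big). \] *)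

theory Defs
  imports "HOL-Analysis.Analysis"
begin

definition beta_fn :: "real \<Rightarrow> real \<Rightarrow> real \<Rightarrow> real \<Rightarrow> real" where
  "beta_fn \<eta>0 \<eta>1 \<eta>2 s = \<eta>0 * exp (- \<eta>1 * s powr \<eta>2)"

definition K_fn :: "real \<Rightarrow> real \<Rightarrow> real \<Rightarrow> real \<Rightarrow> real" where
  "K_fn \<eta>0 \<eta>1 \<eta>2 u = (if u > 0 then u * beta_fn \<eta>0 \<eta>1 \<eta>2 (1 / u) else 0)"

definition Kstar :: "real \<Rightarrow> real \<Rightarrow> real \<Rightarrow> real \<Rightarrow> ereal" where
  "Kstar \<eta>0 \<eta>1 \<eta>2 v = (SUP u\<in>{0..}. ereal (u * v - K_fn \<eta>0 \<eta>1 \<eta>2 u))"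

text \<open>1/K*(v), with the convention 1/(+infinity) = 0\<close>
definition invKstar :: "real \<Rightarrow> real \<Rightarrow> real \<Rightarrow> real \<Rightarrow> real" where
  "invKstar \<eta>0 \<eta>1 \<eta>2 v = real_of_ereal (1 / Kstar \<eta>0 \<eta>1 \<eta>2 v)"

definition F_fn :: "real \<Rightarrow> real \<Rightarrow> real \<Rightarrow> real \<Rightarrow> real \<Rightarrow> real" where
  "F_fn \<eta>0 \<eta>1 \<eta>2 a x = integral {x..a} (invKstar \<eta>0 \<eta>1 \<eta>2)"

definition Finv :: "real \<Rightarrow> real \<Rightarrow> real \<Rightarrow> real \<Rightarrow> real \<Rightarrow> real" where
  "Finv \<eta>0 \<eta>1 \<eta>2 a = the_inv_into {0<..a} (F_fn \<eta>0 \<eta>1 \<eta>2 a)"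

end

theory Submission
  imports Defs
begin

lemma powr_subadd:
  fixes x y p :: real assumes "0 \<le> x" "0 \<le> y" "0 < p" "p \<le> 1"
  shows "(x + y) powr p \<le> x powr p + y powr p"
proof (cases "x + y = 0")
  case True then show ?thesis using assms by simp
next
  case False
  then have s: "x + y > 0" using assms by simp
  have t: "t \<le> t powr p" if "0 \<le> t" "t \<le> 1" for t :: real
  proof (cases "t = 0")
    case True then show ?thesis by simp
  next
    case False
    then have "t powr 1 \<le> t powr p" using that assms by (intro powr_mono') auto
    then show ?thesis using that False by simp
  qed
  have "(x + y) powr p * (x/(x+y) + y/(x+y)) \<le> (x + y) powr p * ((x/(x+y)) powr p + (y/(x+y)) powr p)"
    using s assms by (intro mult_left_mono add_mono t) auto
  also have "\<dots> = x powr p + y powr p"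
    using s assms by (simp add: powr_divide distrib_left)
  finally show ?thesis using s by (simp add: add_divide_distrib[symmetric])
qed

lemma ereal_inv1: "r \<noteq> 0 \<Longrightarrow> 1 / ereal r = ereal (inverse r)"
  by (simp add: divide_ereal_def one_ereal_def)

locale L15 =
  fixes e0 e1 e2 :: real
  assumes e0: "e0 > 0" and e1: "e1 > 0" and e2: "e2 > 0"
begin

abbreviation "K \<equiv> K_fn e0 e1 e2"
abbreviation "Ks \<equiv> Kstar e0 e1 e2"
abbreviation "iK \<equiv> invKstar e0 e1 e2"

lemma K_nonneg: "K u \<ge> 0"
  using e0 by (auto simp: K_fn_def beta_fn_def)

lemma Ks_ge0: "Ks v \<ge> 0"
proof -
  have "ereal (0 * v - K 0) \<le> Ks v"
    unfolding Kstar_def by (rule SUP_upper) auto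
  then show ?thesis by (simp add: K_fn_def zero_ereal_def)
qed

lemma Ks_ge: "u \<ge> 0 \<Longrightarrow> ereal (u * v - K u) \<le> Ks v"
  unfolding Kstar_def by (rule SUP_upper) auto

lemma Ks_mono: assumes "v \<le> w" shows "Ks v \<le> Ks w"
  unfolding Kstar_def
proof (rule SUP_mono)
  fix u :: real assume "u \<in> {0..}"
  then have "u * v \<le> u * w" using assms by (auto intro: mult_left_mono)
  then show "\<exists>m\<in>{0..}. ereal (u * v - K u) \<le> ereal (m * w - K m)"
    using \<open>u \<in> {0..}\<close> by (intro bexI[of _ u]) auto
qed

definition "C0 = (e1/2) powr (1/e2) / 2"
definition "v0 a = min (1/2) (min (a/2) (1/(2*e0)))"

lemma C0_pos: "C0 > 0" using e1 by (simp add: C0_def)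

lemma Ks_lower:
  assumes v: "0 < v" "v < 1" "e0 * v \<le> 1/2"
  shows "Ks v \<ge> ereal (C0 * v * (ln (1 / v)) powr (- 1 / e2))"
proof -
  define L where "L = ln (1/v)"
  have L: "L > 0" using v by (simp add: L_def)
  define u where "u = (2*L/e1) powr (-1/e2)"
  have u: "u > 0" using L e1 by (simp add: u_def)
  have iu: "(1/u) powr e2 = 2*L/e1"
    using L e1 e2 by (simp add: u_def powr_minus_divide powr_powr)
  have "exp (- e1 * (1/u) powr e2) = exp (-2 * L)" using iu e1 by simp
  also have "\<dots> = exp (ln v + ln v)" using v by (simp add: L_def ln_div)
  also have "\<dots> = v^2" using v by (simp only: exp_add exp_ln[OF v(1)] power2_eq_square)

  finally have ex: "exp (- e1 * (1/u) powr e2) = v^2" .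
  have "u * v - K u = u * (v - e0 * v^2)"
    using u ex by (simp add: K_fn_def beta_fn_def algebra_simps)
  also have "\<dots> \<ge> u * (v/2)"
  proof -
    have "e0 * v^2 = (e0 * v) * v" by (simp add: power2_eq_square)
    also have "\<dots> \<le> v/2" using v mult_right_mono[OF v(3), of v] by simp
    finally show ?thesis using u by (intro mult_left_mono) auto
  qed
  finally have A: "u * v - K u \<ge> u * v / 2" by simp
  have "u = (2/e1) powr (-1/e2) * L powr (-1/e2)"
    unfolding u_def using L e1 by (subst powr_mult[symmetric]) auto
  also have "(2/e1) powr (-1/e2) = inverse ((2/e1) powr (1/e2))"
    using powr_minus[of "2/e1" "1/e2"] by (simp only: minus_divide_left)
  also have "\<dots> = (e1/2) powr (1/e2)"
    using e1 by (simp add: powr_divide)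
  finally have "u = (e1/2) powr (1/e2) * L powr (-1/e2)" .
  then have "u * v / 2 = C0 * v * L powr (- 1 / e2)"
    unfolding C0_def by (simp only: mult_ac times_divide_eq_left times_divide_eq_right)
  then have "C0 * v * L powr (- 1 / e2) \<le> u * v - K u" using A by linarith
  then have "ereal (C0 * v * L powr (- 1 / e2)) \<le> ereal (u * v - K u)" by (simp only: ereal_less_eq)
  also have "\<dots> \<le> Ks v" using u by (intro Ks_ge) simp
  finally show ?thesis unfolding L_def .
qed


lemma Ks_pos: assumes "v > 0" shows "Ks v > 0"
proof -
  define w where "w = min v (min (1/2) (1/(2*e0)))"
  have w1: "0 < w" "w < 1" "w \<le> v" "w \<le> 1/(2*e0)"
    using assms e0 by (auto simp: w_def)
  have "e0 * w \<le> e0 * (1/(2*e0))" using e0 w1 by (intro mult_left_mono) auto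
  then have w: "0 < w" "w < 1" "e0 * w \<le> 1/2" "w \<le> v" using w1 e0 by auto
  have "0 < C0 * w * (ln (1 / w)) powr (- 1 / e2)"
    using w C0_pos by (intro mult_pos_pos) (auto simp: powr_gt_zero)
  then have "ereal 0 < ereal (C0 * w * (ln (1 / w)) powr (- 1 / e2))" by simp
  also have "\<dots> \<le> Ks w" using Ks_lower[OF w(1-3)] .
  also have "\<dots> \<le> Ks v" using Ks_mono[OF w(4)] .
  finally show ?thesis by (simp add: zero_ereal_def)
qed

lemma iK_nonneg: "iK v \<ge> 0"
proof (cases "Ks v")
  case (real r)
  then have "r \<ge> 0" using Ks_ge0[of v] by simp
  then show ?thesis using real unfolding invKstar_def
    by (cases "r = 0") (auto simp: divide_ereal_def)
next
  case PInf then show ?thesis unfolding invKstar_def by simp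
next
  case MInf then show ?thesis using Ks_ge0[of v] by simp
qed

lemma iK_fin: assumes "v > 0" "Ks v = ereal r" shows "r > 0" "iK v = 1 / r"
proof -
  show r: "r > 0" using Ks_pos[OF assms(1)] assms(2) by simp
  show "iK v = 1 / r" unfolding invKstar_def assms(2) using r
    by (simp add: ereal_inv1) (simp only: inverse_eq_divide)
qed

lemma iK_inf: assumes "Ks v = \<infinity>" shows "iK v = 0"
  unfolding invKstar_def assms by simp

lemma Ks_cases: assumes "v > 0" obtains r where "r > 0" "Ks v = ereal r" "iK v = 1/r" | "Ks v = \<infinity>" "iK v = 0"
proof (cases "Ks v")
  case (real r) then show ?thesis using iK_fin[OF assms] that by blast
next
  case PInf then show ?thesis using iK_inf that by blast
next
  case MInf then show ?thesis using Ks_ge0[of v] by simp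
qed

lemma iK_antimono: assumes "0 < v" "v \<le> w" shows "iK w \<le> iK v"
proof -
  have w: "w > 0" using assms by simp
  show ?thesis
  proof (cases rule: Ks_cases[OF w])
    case (1 r)
    then show ?thesis
    proof (cases rule: Ks_cases[OF assms(1)])
      case (1 s)
      then have "s \<le> r" using Ks_mono[OF assms(2)] \<open>Ks w = ereal r\<close> by simp
      then show ?thesis using 1 \<open>iK w = 1/r\<close> by (simp add: frac_le)
    next
      case 2
      then show ?thesis using Ks_mono[OF assms(2)] \<open>Ks w = ereal r\<close> by simp
    qed
  next
    case 2 then show ?thesis using iK_nonneg by simp
  qed
qed

lemma iK_upper: assumes "0 < v" "B > 0" "ereal B \<le> Ks v" shows "iK v \<le> 1 / B"
proof (cases rule: Ks_cases[OF assms(1)])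
  case (1 r) then show ?thesis using assms by (simp add: frac_le)
next
  case 2 then show ?thesis using assms by simp
qed

definition "U = e1 powr (1/e2)"
lemma U_pos: "U > 0" using e1 by (simp add: U_def)

lemma Ks_upper: assumes "0 < v" "v \<le> e0 / exp 1" shows "Ks v \<le> ereal (U * v)"
  unfolding Kstar_def
proof (rule SUP_least)
  fix u :: real assume "u \<in> {0..}"
  then have u: "u \<ge> 0" by simp
  show "ereal (u * v - K u) \<le> ereal (U * v)"
  proof (cases "u \<le> U")
    case True
    then have "u * v \<le> U * v" using assms by (intro mult_right_mono) auto
    then have "u * v - K u \<le> U * v" using K_nonneg[of u] by linarith
    then show ?thesis by (simp only: ereal_less_eq)
  next
    case False
    then have up: "u > 0" using U_pos by simp
    have "1/u < 1/U" using False U_pos by (simp add: frac_less2)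
    then have "(1/u) powr e2 < (1/U) powr e2" using up e2 by (intro powr_less_mono2) auto
    also have "(1/U) powr e2 = 1/e1" using e1 e2 by (simp add: U_def powr_divide powr_powr)
    finally have "e1 * (1/u) powr e2 < 1" using e1 by (simp add: field_simps)
    then have "exp (-1) < exp (- e1 * (1/u) powr e2)" by simp
    then have "e0 / exp 1 < e0 * exp (- e1 * (1/u) powr e2)" using e0 by (simp add: exp_minus field_simps)
    then have "v - e0 * exp (- e1 * (1/u) powr e2) < 0" using assms by simp
    then have "u * (v - e0 * exp (- e1 * (1/u) powr e2)) < 0" using up by (simp add: mult_pos_neg)
    then have "u * v - K u < 0" using up by (simp add: K_fn_def beta_fn_def algebra_simps)
    moreover have "U * v > 0" using U_pos assms by simp
    ultimately have "u * v - K u \<le> U * v" by linarith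
    then show ?thesis by (simp only: ereal_less_eq)
  qed
qed

lemma iK_lower: assumes "0 < v" "v \<le> e0 / exp 1" shows "iK v \<ge> 1 / (U * v)"
proof (cases rule: Ks_cases[OF assms(1)])
  case (1 r)
  then have "r \<le> U * v" using Ks_upper[OF assms] by simp
  then show ?thesis using 1 by (simp add: frac_le)
next
  case 2 then show ?thesis using Ks_upper[OF assms] by simp
qed

lemma iK_integrable: assumes "0 < x" shows "iK integrable_on {x..y}"
proof -
  have "mono_on {x..y} (\<lambda>v. - iK v)"
  proof (rule mono_onI)
    fix r s assume "r \<in> {x..y}" "s \<in> {x..y}" "r \<le> s"
    then have "0 < r" using assms by simp
    then show "- iK r \<le> - iK s" using iK_antimono[of r s] \<open>r \<le> s\<close> by simp
  qed
  then have "(\<lambda>v. - iK v) integrable_on {x..y}" by (rule integrable_on_mono_on)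
  then have "(\<lambda>v. - (- iK v)) integrable_on {x..y}" by (rule integrable_neg)
  then show ?thesis by (simp only: minus_minus)
qed

end

locale L15a = L15 +
  fixes a :: real
  assumes a: "a > 0"
begin

abbreviation "F \<equiv> F_fn e0 e1 e2 a"

lemma F_split: assumes "0 < x" "x \<le> y" "y \<le> a" shows "F x = integral {x..y} iK + F y"
  unfolding F_fn_def using Henstock_Kurzweil_Integration.integral_combine[OF assms(2,3) iK_integrable[OF assms(1), of a]] by simp

lemma int_nonneg: "integral {x..y} iK \<ge> 0"
proof (cases "iK integrable_on {x..y}")
  case True then show ?thesis by (rule integral_nonneg) (use iK_nonneg in auto)
next
  case False then show ?thesis by (simp add: not_integrable_integral)
qed

lemma F_nonneg: "F x \<ge> 0" unfolding F_fn_def by (rule int_nonneg)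

lemma F_a: "F a = 0" unfolding F_fn_def by simp

lemma F_cont: assumes "0 < x0" shows "continuous_on {x0..a} F"
  unfolding F_fn_def by (rule indefinite_integral_continuous_1'[OF iK_integrable[OF assms]])

lemma F_large: "\<exists>x\<in>{0<..a}. F x \<ge> t"
proof -
  define v1 where "v1 = min (e0 / exp 1) a"
  have v1: "0 < v1" "v1 \<le> a" "v1 \<le> e0 / exp 1" using e0 a by (auto simp: v1_def)
  define t' where "t' = max t 0"
  define x where "x = v1 * exp (- U * t')"
  have x: "0 < x" "x \<le> v1" using v1 U_pos by (auto simp: x_def t'_def mult_le_cancel_left1)
  have D: "((\<lambda>v. ln v / U) has_vector_derivative (1 / (U * v))) (at v within {x..v1})"
    if "v \<in> {x..v1}" for v
  proof -
    have "v > 0" "U \<noteq> 0" using that x U_pos by auto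
    then have "((\<lambda>v. ln v / U) has_real_derivative (1 / v / U)) (at v within {x..v1})"
      by (auto intro!: derivative_eq_intros)
    then show ?thesis by (simp add: has_real_derivative_iff_has_vector_derivative[symmetric] mult.commute)
  qed
  have I: "((\<lambda>v. 1 / (U * v)) has_integral (ln v1 / U - ln x / U)) {x..v1}"
    by (rule fundamental_theorem_of_calculus[OF x(2) D]) 
  have "ln v1 / U - ln x / U = t'"
    using v1 U_pos by (simp add: x_def ln_mult diff_divide_distrib[symmetric])
  then have I: "((\<lambda>v. 1 / (U * v)) has_integral t') {x..v1}" using I by simp
  have "t' \<le> integral {x..v1} iK"
    using I integrable_integral[OF iK_integrable[OF x(1)]]
  proof (rule has_integral_le)
    fix v assume "v \<in> {x..v1}"
    then have "0 < v" "v \<le> e0 / exp 1" using x v1 by auto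
    then show "1 / (U * v) \<le> iK v" by (rule iK_lower)
  qed
  also have "\<dots> \<le> F x" using F_split[OF x(1) x(2) v1(2)] F_nonneg[of v1] by simp
  finally have "t \<le> F x" unfolding t'_def by linarith
  moreover have "x \<in> {0<..a}" using x v1 by simp
  ultimately show ?thesis by blast
qed

lemma F_exists: assumes "t \<ge> 0" shows "\<exists>x\<in>{0<..a}. F x = t"
proof -
  obtain x0 where x0: "x0 \<in> {0<..a}" "F x0 \<ge> t" using F_large by blast
  have "\<exists>x. x0 \<le> x \<and> x \<le> a \<and> F x = t"
  proof (rule IVT2'[of F a t x0])
    show "F a \<le> t" using F_a assms by simp
    show "t \<le> F x0" using x0 by simp
    show "x0 \<le> a" using x0 by simp
    show "continuous_on {x0..a} F" using x0 by (intro F_cont) simp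
  qed
  then show ?thesis using x0 by force
qed

lemma F_unique_aux: assumes "0 < x" "x < y" "y \<le> a" "F x = t" "F y = t" "t > 0" shows False
proof -
  have "iK y > 0"
  proof (rule ccontr)
    assume "\<not> iK y > 0"
    then have "iK y = 0" using iK_nonneg[of y] by simp
    then have "\<forall>v\<in>{y..a}. iK v = 0"
      using iK_antimono[of y] iK_nonneg assms by (metis atLeastAtMost_iff dual_order.antisym less_trans)
    then have "F y = integral {y..a} (\<lambda>v. 0::real)" unfolding F_fn_def by (intro Henstock_Kurzweil_Integration.integral_cong) auto
    then show False using assms by simp
  qed
  have "integral {x..y} iK = 0" using F_split[of x y] assms by simp
  moreover have "integral {x..y} (\<lambda>v. iK y) \<le> integral {x..y} iK"
  proof (rule integral_le)
    show "(\<lambda>v. iK y) integrable_on {x..y}" by (rule integrable_const_ivl)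
    show "iK integrable_on {x..y}" using iK_integrable[OF assms(1)] .
    fix v assume "v \<in> {x..y}"
    then have "0 < v" "v \<le> y" using assms by auto
    then show "iK y \<le> iK v" by (rule iK_antimono)
  qed
  moreover have "integral {x..y} (\<lambda>v. iK y) > 0" using assms \<open>iK y > 0\<close> by simp
  ultimately show False by simp
qed

lemma Finv_eq: assumes "x \<in> {0<..a}" "F x = t" "t > 0" shows "Finv e0 e1 e2 a t = x"
  unfolding Finv_def the_inv_into_def
proof (rule the_equality)
  show "x \<in> {0<..a} \<and> F x = t" using assms by simp
next
  fix y assume "y \<in> {0<..a} \<and> F y = t"
  then show "y = x" using F_unique_aux[of x y t] F_unique_aux[of y x t] assms
    by (metis greaterThanAtMost_iff linorder_neqE_linordered_idom)
qed


lemma F_antimono: assumes "0 < x" "x \<le> y" "y \<le> a" shows "F y \<le> F x"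
  using F_split[OF assms] int_nonneg[of x y] by simp

definition "qe = (1 + e2) / e2"

lemma qe_facts: "qe > 1" "qe - 1 = 1 / e2"
  using e2 by (auto simp: qe_def field_simps)

lemma G_deriv:
  assumes v: "0 < v" "v < 1"
  shows "((\<lambda>v. - ((ln (1/v)) powr qe) / (C0 * qe)) has_real_derivative
            1 / (C0 * v * (ln (1 / v)) powr (- 1 / e2))) (at v)"
proof -
  define L where "L = ln (1/v)"
  have L: "L > 0" using v by (simp add: L_def)
  have d1: "((\<lambda>v. ln (1/v)) has_real_derivative (- 1 / v)) (at v)"
    using v by (auto intro!: derivative_eq_intros simp: field_simps power2_eq_square)
  have d2: "((\<lambda>v. (ln (1/v)) powr qe) has_real_derivative qe * (ln (1/v)) powr (qe - of_nat 1) * (- 1 / v)) (at v)"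
    by (rule DERIV_fun_powr[OF d1]) (use L in \<open>simp add: L_def\<close>)
  have d3: "((\<lambda>v. - ((ln (1/v)) powr qe) / (C0 * qe)) has_real_derivative
              - (qe * (ln (1/v)) powr (qe - of_nat 1) * (- 1 / v)) / (C0 * qe)) (at v)"
    using DERIV_divide[OF DERIV_minus[OF d2] DERIV_const[of "C0 * qe"]] C0_pos qe_facts
    by simp
  have "- (qe * (ln (1/v)) powr (qe - of_nat 1) * (- 1 / v)) / (C0 * qe) = L powr (1/e2) / (C0 * v)"
  proof -
    have e: "qe - of_nat 1 = 1/e2" using qe_facts by simp
    have nz: "qe \<noteq> 0" "C0 \<noteq> 0" "v \<noteq> 0" using qe_facts C0_pos v by auto
    show ?thesis unfolding e L_def using nz by (simp add: field_simps)
  qed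
  also have "\<dots> = 1 / (C0 * v * L powr (- 1 / e2))"
  proof -
    have i: "L powr (-1/e2) = inverse (L powr (1/e2))"
      using powr_minus[of L "1/e2"] by (simp only: minus_divide_left)
    have "L powr (1/e2) > 0" using L by simp
    then show ?thesis unfolding i using C0_pos v by (simp add: field_simps)
  qed
  finally show ?thesis using d3 by (simp add: L_def)
qed

lemma F_bound:
  assumes "0 < x" "x < w" "w \<le> a" "w < 1" "e0 * w \<le> 1/2"
  shows "F x \<le> F w + (ln (1/x)) powr qe / (C0 * qe)"
proof -
  define G where "G = (\<lambda>v. - ((ln (1/v)) powr qe) / (C0 * qe))"
  define g where "g = (\<lambda>v::real. 1 / (C0 * v * (ln (1 / v)) powr (- 1 / e2)))"
  have D: "(G has_vector_derivative g v) (at v within {x..w})" if "v \<in> {x..w}" for v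
  proof -
    have "0 < v" "v < 1" using that assms by auto
    then have "(G has_real_derivative g v) (at v)" unfolding G_def g_def by (rule G_deriv)
    then have "(G has_real_derivative g v) (at v within {x..w})" by (rule DERIV_subset) simp
    then show ?thesis by (simp add: has_real_derivative_iff_has_vector_derivative[symmetric])
  qed
  have I: "(g has_integral (G w - G x)) {x..w}"
    by (rule fundamental_theorem_of_calculus[OF _ D]) (use assms in simp_all)
  have "integral {x..w} iK \<le> G w - G x"
    using integrable_integral[OF iK_integrable[OF assms(1)]] I
  proof (rule has_integral_le)
    fix v assume "v \<in> {x..w}"
    then have v: "0 < v" "v < 1" "v \<le> w" using assms by auto
    have "e0 * v \<le> e0 * w" using v e0 by (intro mult_left_mono) auto
    then have "e0 * v \<le> 1/2" using assms by linarith
    then have lo: "ereal (C0 * v * (ln (1 / v)) powr (- 1 / e2)) \<le> Ks v"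
      using Ks_lower v by blast
    have "0 < C0 * v * (ln (1 / v)) powr (- 1 / e2)"
      using v C0_pos by (intro mult_pos_pos) (auto simp: powr_gt_zero)
    then show "iK v \<le> g v" unfolding g_def using iK_upper[OF v(1) _ lo] by blast
  qed
  moreover have "G w \<le> 0" unfolding G_def using C0_pos qe_facts by (simp add: divide_nonneg_pos)
  ultimately have "integral {x..w} iK \<le> - G x" by linarith
  then show ?thesis using F_split[of x w] assms by (simp add: G_def)
qed

end


theorem lemma15:
  fixes \<eta>0 \<eta>1 \<eta>2 a :: real
  assumes "\<eta>0 > 0" and "\<eta>1 > 0" and "\<eta>2 > 0" and "a > 0"
  shows "\<exists>C > 0.
           (\<exists>v0. 0 < v0 \<and> v0 < min 1 a \<and>
              (\<forall>v\<in>{0<..v0}. Kstar \<eta>0 \<eta>1 \<eta>2 v \<ge> ereal (C * v * (ln (1 / v)) powr (- 1 / \<eta>2)))) \<and>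
           (\<exists>C' > 0. \<forall>n::nat.
              Finv \<eta>0 \<eta>1 \<eta>2 a (real n)
                \<le> C' * exp (- ((C * (1 + \<eta>2) / \<eta>2 * real n) powr (\<eta>2 / (1 + \<eta>2)))))"
proof -
  interpret L15a \<eta>0 \<eta>1 \<eta>2 a by unfold_locales (use assms in auto)
  define w where "w = v0 a"
  have w1: "0 < w" "w < 1" "w < a" "w \<le> 1/(2*\<eta>0)"
    using assms by (auto simp: w_def v0_def)
  have "\<eta>0 * w \<le> \<eta>0 * (1/(2*\<eta>0))" using w1 assms by (intro mult_left_mono) auto
  then have w: "0 < w" "w < 1" "w < a" "\<eta>0 * w \<le> 1/2" using w1 assms by auto
  have part1: "\<forall>v\<in>{0<..w}. Kstar \<eta>0 \<eta>1 \<eta>2 v \<ge> ereal (C0 * v * (ln (1 / v)) powr (- 1 / \<eta>2))"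
  proof
    fix v assume "v \<in> {0<..w}"
    then have v: "0 < v" "v \<le> w" by auto
    have "\<eta>0 * v \<le> \<eta>0 * w" using v assms by (intro mult_left_mono) auto
    then show "Kstar \<eta>0 \<eta>1 \<eta>2 v \<ge> ereal (C0 * v * (ln (1 / v)) powr (- 1 / \<eta>2))"
      using Ks_lower[of v] v w by simp
  qed
  define c where "c = C0 * (1 + \<eta>2) / \<eta>2"
  define p where "p = \<eta>2 / (1 + \<eta>2)"
  define M where "M = F w"
  define B where "B = (c * M) powr p"
  define C' where "C' = a * exp B + exp B + \<bar>Finv \<eta>0 \<eta>1 \<eta>2 a 0\<bar>"
  have c: "c > 0" "c = C0 * qe" using C0_pos assms by (auto simp: c_def qe_def)
  have p: "0 < p" "p \<le> 1" "qe * p = 1" using assms by (auto simp: p_def qe_def)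
  have M: "M \<ge> 0" unfolding M_def by (rule F_nonneg)
  have C': "C' > 0" unfolding C'_def using assms by (intro add_pos_nonneg add_pos_pos) auto
  have bound: "Finv \<eta>0 \<eta>1 \<eta>2 a (real n) \<le> C' * exp (- ((c * real n) powr p))" for n :: nat
  proof (cases "n = 0")
    case True
    have "0 \<le> a * exp B" using assms by simp
    moreover have "Finv \<eta>0 \<eta>1 \<eta>2 a 0 \<le> \<bar>Finv \<eta>0 \<eta>1 \<eta>2 a 0\<bar>" by (rule abs_ge_self)
    moreover have "0 < exp B" by simp
    ultimately have "Finv \<eta>0 \<eta>1 \<eta>2 a 0 \<le> C'" unfolding C'_def by linarith
    then show ?thesis using True by simp
  next
    case False
    then have npos: "real n > 0" by simp
    obtain x where x: "x \<in> {0<..a}" "F x = real n" using F_exists[of "real n"] by auto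
    have fx: "Finv \<eta>0 \<eta>1 \<eta>2 a (real n) = x" by (rule Finv_eq[OF x npos])
    have eB: "exp B * exp (- ((c * real n) powr p)) \<le> C' * exp (- ((c * real n) powr p))"
      unfolding C'_def using assms by (intro mult_right_mono) auto
    show ?thesis
    proof (cases "real n \<le> M")
      case True
      have "(c * real n) powr p \<le> (c * M) powr p"
        using True c(1) p npos by (intro powr_mono2 mult_left_mono) auto
      then have "exp (- B) \<le> exp (- ((c * real n) powr p))" unfolding B_def by simp
      then have "a * exp B * exp (- B) \<le> a * exp B * exp (- ((c * real n) powr p))"
        using assms by (intro mult_left_mono) auto
      moreover have "exp B * exp (- B) = 1" by (simp only: exp_add[symmetric]) simp
      then have "a * exp B * exp (- B) = a" by (simp add: mult.assoc)
      ultimately have "a \<le> a * exp B * exp (- ((c * real n) powr p))" by simp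
      also have "\<dots> \<le> C' * exp (- ((c * real n) powr p))"
        unfolding C'_def by (intro mult_right_mono) auto
      finally show ?thesis using fx x by simp
    next
      case False
      have xw: "x < w"
      proof (rule ccontr)
        assume "\<not> x < w"
        then have "F x \<le> F w" using F_antimono[of w x] w x by simp
        then show False using False x M_def by simp
      qed
      define L where "L = ln (1/x)"
      have L: "L > 0" using xw w x by (simp add: L_def)
      have "real n \<le> M + L powr qe / c"
        using F_bound[OF _ xw _ w(2) w(4)] x w c by (simp add: M_def L_def)
      then have "real n - M \<le> L powr qe / c" by linarith
      then have "c * (real n - M) \<le> c * (L powr qe / c)" using c(1) by (intro mult_left_mono) auto
      then have "c * (real n - M) \<le> L powr qe" using c(1) by simp
      then have "(c * (real n - M)) powr p \<le> (L powr qe) powr p"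
        using c(1) p False by (intro powr_mono2 mult_nonneg_nonneg) auto
      also have "\<dots> = L" using p L by (simp add: powr_powr)
      finally have A: "(c * (real n - M)) powr p \<le> L" .
      have "(c * real n) powr p = (c * (real n - M) + c * M) powr p" by (simp add: algebra_simps)
      also have "\<dots> \<le> (c * (real n - M)) powr p + (c * M) powr p"
        using c(1) p False M by (intro powr_subadd mult_nonneg_nonneg) auto
      finally have "(c * real n) powr p \<le> L + B" using A unfolding B_def by linarith
      then have "- L \<le> B + - ((c * real n) powr p)" by linarith
      then have "exp (- L) \<le> exp (B + - ((c * real n) powr p))" by simp
      also have "\<dots> = exp B * exp (- ((c * real n) powr p))" by (rule exp_add)
      also have "exp (- L) = x" using x by (simp add: L_def ln_div exp_minus_inverse)
      finally have "x \<le> exp B * exp (- ((c * real n) powr p))" .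
      then have "x \<le> C' * exp (- ((c * real n) powr p))" using eB by (rule order_trans)
      then show ?thesis using fx by simp
    qed
  qed
  have P1: "\<exists>v0. 0 < v0 \<and> v0 < min 1 a \<and>
              (\<forall>v\<in>{0<..v0}. Kstar \<eta>0 \<eta>1 \<eta>2 v \<ge> ereal (C0 * v * (ln (1 / v)) powr (- 1 / \<eta>2)))"
      using part1 w by (intro exI[of _ w]) auto
  have P2: "\<exists>C' > 0. \<forall>n::nat.
              Finv \<eta>0 \<eta>1 \<eta>2 a (real n)
                \<le> C' * exp (- ((C0 * (1 + \<eta>2) / \<eta>2 * real n) powr (\<eta>2 / (1 + \<eta>2))))"
      using bound C' unfolding c_def p_def by blast
  show ?thesis using C0_pos P1 P2 by blast
qed

end
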